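(* Let $u\in\{\mathrm{fail},\mathrm{succ}\}$, and let $F\subseteq H_u$ and $G\subseteq N$ with $F\subseteq G$. Let $G_{|F|}$ be the set of the $|F|$ tests of $G$ with the smallest values of $\sigma_u^{-1}$ (i.e., appearing earliest in the order $\sigma_u$). Then $$\sum_{j\in G_{|F|}}c_j\le 2\sum_{j\in F}c_j.$$
   Context: Tests $N=\{1,\dots,n\}$ have costs $c_j\ge0$ and probabilities $p_j\in(0,1)$. $\sigma_{\mathrm{fail}},\sigma_{\mathrm{succ}}$ are permutations of $N$ (ties broken arbitrarily) with $c_{\sigma_{\mathrm{fail}}(1)}/(1-p_{\sigma_{\mathrm{fail}}(1)})\le\dots\le c_{\sigma_{\mathrm{fail}}(n)}/(1-p_{\sigma_{\mathrm{fail}}(n)})$ and $c_{\sigma_{\mathrm{succ}}(1)}/p_{\sigma_{\mathrm{succ}}(1)}\le\dots\le c_{\sigma_{\mathrm{succ}}(n)}/p_{\sigma_{\mathrm{succ}}(n)}$. $H_{\mathrm{fail}}=\{j\in N:p_j<\tfrac12\}$ and $H_{\mathrm{succ}}=\{j\in N:p_j\ge\tfrac12\}$. *)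

theory Defs
  imports Complex_Main
begin

datatype outcome = Fail | Succ

fun ratio :: "outcome \<Rightarrow> (nat \<Rightarrow> real) \<Rightarrow> (nat \<Rightarrow> real) \<Rightarrow> nat \<Rightarrow> real" where
  "ratio Fail c p j = c j / (1 - p j)"
| "ratio Succ c p j = c j / p j"

fun H :: "outcome \<Rightarrow> nat \<Rightarrow> (nat \<Rightarrow> real) \<Rightarrow> nat set" where
  "H Fail n p = {j \<in> {1..n}. p j < 1/2}"
| "H Succ n p = {j \<in> {1..n}. p j \<ge> 1/2}"

definition sorted_perm :: "outcome \<Rightarrow> nat \<Rightarrow> (nat \<Rightarrow> real) \<Rightarrow> (nat \<Rightarrow> real) \<Rightarrow> (nat \<Rightarrow> nat) \<Rightarrow> bool" where
  "sorted_perm u n c p \<sigma> \<longleftrightarrow> bij_betw \<sigma> {1..n} {1..n} \<and>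
     (\<forall>i\<in>{1..n}. \<forall>j\<in>{1..n}. i \<le> j \<longrightarrow> ratio u c p (\<sigma> i) \<le> ratio u c p (\<sigma> j))"

definition first_k :: "(nat \<Rightarrow> nat) \<Rightarrow> nat \<Rightarrow> nat set \<Rightarrow> nat \<Rightarrow> nat set" where
  "first_k \<sigma> n G k = {j \<in> G. card {i \<in> G. inv_into {1..n} \<sigma> i < inv_into {1..n} \<sigma> j} < k}"

end

theory Submission
  imports Defs
begin

theorem lemma4:
  fixes n :: nat and c p :: "nat \<Rightarrow> real" and \<sigma> :: "nat \<Rightarrow> nat"
    and u :: outcome and F G :: "nat set"
  assumes c_nonneg: "\<forall>j\<in>{1..n}. c j \<ge> 0"
    and p_range: "\<forall>j\<in>{1..n}. 0 < p j \<and> p j < 1"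
    and sigma: "sorted_perm u n c p \<sigma>"
    and F_H: "F \<subseteq> H u n p"
    and G_N: "G \<subseteq> {1..n}"
    and F_G: "F \<subseteq> G"
  shows "(\<Sum>j\<in>first_k \<sigma> n G (card F). c j) \<le> 2 * (\<Sum>j\<in>F. c j)"
proof -
  define rk where "rk = inv_into {1..n} \<sigma>"
  define r where "r = ratio u c p"
  define K where "K = first_k \<sigma> n G (card F)"
  have bij: "bij_betw \<sigma> {1..n} {1..n}" and srt: "\<forall>i\<in>{1..n}. \<forall>j\<in>{1..n}. i \<le> j \<longrightarrow> r (\<sigma> i) \<le> r (\<sigma> j)"
    using sigma unfolding sorted_perm_def r_def by auto
  have bijrk: "bij_betw rk {1..n} {1..n}" unfolding rk_def using bij by (rule bij_betw_inv_into)
  have rkin: "rk x \<in> {1..n}" if "x \<in> {1..n}" for x using bijrk that by (meson bij_betwE)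
  have srk: "\<sigma> (rk x) = x" if "x \<in> {1..n}" for x
    unfolding rk_def using bij that by (metis bij_betw_def f_inv_into_f)
  have mono: "r x \<le> r y" if "x \<in> {1..n}" "y \<in> {1..n}" "rk x \<le> rk y" for x y
    using srt rkin[OF that(1)] rkin[OF that(2)] that(3) srk[OF that(1)] srk[OF that(2)] by metis
  have injrk: "inj_on rk {1..n}" using bijrk bij_betw_def by blast
  have finG: "finite G" using G_N finite_subset by blast
  have finF: "finite F" using F_G finG finite_subset by blast
  have KG: "K \<subseteq> G" unfolding K_def first_k_def by auto
  have finK: "finite K" using KG finG finite_subset by blast
  define f where "f j = card {i \<in> G. rk i < rk j}" for j
  have Kdef: "K = {j \<in> G. f j < card F}" unfolding K_def first_k_def f_def rk_def by simp
  have key: "rk x < rk y" if "x \<in> K" "y \<in> G - K" for x y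
  proof (rule ccontr)
    assume "\<not> rk x < rk y"
    hence "{i \<in> G. rk i < rk y} \<subseteq> {i \<in> G. rk i < rk x}" by auto
    hence "f y \<le> f x" unfolding f_def using finG by (intro card_mono) auto
    thus False using that Kdef by auto
  qed
  have finjK: "inj_on f K"
  proof
    fix x y assume xy: "x \<in> K" "y \<in> K" "f x = f y"
    show "x = y"
    proof (rule ccontr)
      assume ne: "x \<noteq> y"
      have xn: "x \<in> {1..n}" "y \<in> {1..n}" using xy KG G_N by auto
      have "rk x \<noteq> rk y" using ne injrk xn by (meson inj_on_def)
      then consider "rk x < rk y" | "rk y < rk x" by linarith
      thus False
      proof cases
        case 1
        have "{i \<in> G. rk i < rk x} \<subset> {i \<in> G. rk i < rk y}" using 1 xy KG by auto
        hence "f x < f y" unfolding f_def using finG by (intro psubset_card_mono) auto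
        thus False using xy by simp
      next
        case 2
        have "{i \<in> G. rk i < rk y} \<subset> {i \<in> G. rk i < rk x}" using 2 xy KG by auto
        hence "f y < f x" unfolding f_def using finG by (intro psubset_card_mono) auto
        thus False using xy by simp
      qed
    qed
  qed
  have cardK: "card K \<le> card F"
  proof -
    have "f ` K \<subseteq> {..<card F}" using Kdef by auto
    hence "card K \<le> card {..<card F}" using card_inj_on_le[OF finjK] by blast
    thus ?thesis by simp
  qed
  define A where "A = K - F"
  define B where "B = F - K"
  have cK: "card K = card (K \<inter> F) + card A" unfolding A_def
    using finK card_Int_Diff by blast
  have cF: "card F = card (K \<inter> F) + card B" unfolding B_def
    using finF card_Int_Diff[of F K] by (simp add: Int_commute)
  have cAB: "card A \<le> card B" using cK cF cardK by linarith
  have rnn: "r j \<ge> 0" if "j \<in> {1..n}" for j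
  proof -
    have "c j \<ge> 0" "0 < p j" "p j < 1" using c_nonneg p_range that by auto
    thus ?thesis unfolding r_def by (cases u) auto
  qed
  have cr: "c j \<le> r j" if "j \<in> {1..n}" for j
  proof (cases u)
    case Fail
    have "p j < 1" using p_range that by auto
    hence "c j = r j * (1 - p j)" using Fail unfolding r_def by auto
    moreover have "0 \<le> r j" using rnn that .
    moreover have "0 < p j" "p j < 1" using p_range that by auto
    ultimately show ?thesis by (smt (verit) mult_left_mono mult_right_mono mult_cancel_left1)
  next
    case Succ
    have "0 < p j" using p_range that by auto
    hence "c j = r j * p j" using Succ unfolding r_def by auto
    moreover have "0 \<le> r j" using rnn that .
    moreover have "0 < p j" "p j < 1" using p_range that by auto
    ultimately show ?thesis by (smt (verit) mult_left_mono mult_right_mono mult_cancel_left1)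
  qed
  have rc: "r j \<le> 2 * c j" if "j \<in> F" for j
  proof -
    have jn: "j \<in> {1..n}" using that F_G G_N by auto
    show ?thesis
    proof (cases u)
      case Fail
      have "p j < 1" using p_range jn by auto
    hence "c j = r j * (1 - p j)" using Fail unfolding r_def by auto
      moreover have "p j < 1/2" using Fail F_H that by auto
      moreover have "0 \<le> r j" using rnn jn .
      ultimately show ?thesis using mult_left_mono[of 1 "2*(1-p j)" "r j"] by (simp add: algebra_simps)
    next
      case Succ
      have "0 < p j" using p_range jn by auto
    hence "c j = r j * p j" using Succ unfolding r_def by auto
      moreover have "p j \<ge> 1/2" using Succ F_H that by auto
      moreover have "0 \<le> r j" using rnn jn .
      ultimately show ?thesis using mult_left_mono[of 1 "2*p j" "r j"] by (simp add: algebra_simps)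
    qed
  qed
  have AB: "sum r A \<le> sum r B"
  proof (cases "B = {}")
    case True
    have "finite A" unfolding A_def using finK by simp
    hence "A = {}" using cAB True by simp
    thus ?thesis using True by simp
  next
    case False
    have finB: "finite B" unfolding B_def using finF by simp
    have finA: "finite A" unfolding A_def using finK by simp
    define m where "m = Min (r ` B)"
    have mB: "m \<le> r b" if "b \<in> B" for b unfolding m_def using finB that by simp
    have mA: "r a \<le> m" if "a \<in> A" for a
    proof -
      have "m \<in> r ` B" unfolding m_def using finB False by simp
      then obtain b where b: "b \<in> B" "m = r b" by auto
      have "b \<in> G - K" using b F_G unfolding B_def by auto
      moreover have "a \<in> K" using that unfolding A_def by auto
      ultimately have "rk a < rk b" using key by blast
      moreover have "a \<in> {1..n}" "b \<in> {1..n}" using that b(1) KG G_N F_G unfolding A_def B_def by auto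
      ultimately show ?thesis using mono b by simp
    qed
    have m0: "m \<ge> 0"
    proof -
      have "m \<in> r ` B" unfolding m_def using finB False by simp
      then obtain b where b: "b \<in> B" "m = r b" by auto
      thus ?thesis using rnn F_G G_N unfolding B_def by auto
    qed
    have "sum r A \<le> of_nat (card A) * m" using sum_bounded_above[of A r m] mA by simp
    also have "\<dots> \<le> of_nat (card B) * m" using cAB m0 by (simp add: mult_right_mono)
    also have "\<dots> \<le> sum r B" using sum_bounded_below[of B m r] mB by simp
    finally show ?thesis .
  qed
  have "sum c K \<le> sum r K" using KG G_N cr by (intro sum_mono) auto
  also have "sum r K = sum r (K \<inter> F) + sum r A" unfolding A_def
    using finK by (metis sum.Int_Diff)
  also have "\<dots> \<le> sum r (K \<inter> F) + sum r B" using AB by simp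
  also have "\<dots> = sum r F" unfolding B_def using finF
    by (metis Int_commute sum.Int_Diff)
  also have "\<dots> \<le> sum (\<lambda>j. 2 * c j) F" using rc by (intro sum_mono) auto
  also have "\<dots> = 2 * sum c F" by (simp add: sum_distrib_left)
  finally show ?thesis unfolding K_def .
qed

end
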